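(* Let $q\in\mathbb{C}^\times$ be not a root of unity, $n\ge2$, $\mathbf{Q}=(Q_1,\dots,Q_{n-1})\in\mathbb{C}^{n-1}$. Every one-dimensional $U_q(\mathfrak{sl}_n^{\langle\mathbf{Q}\rangle}[x])$-module is isomorphic to $\mathcal{D}^{\langle\mathbf{Q}\rangle}_{\boldsymbol\beta}$ for some $\boldsymbol\beta\in\mathbb{B}^{\langle\mathbf{Q}\rangle}$.
   Context: Let $I=\{1,\dots,n-1\}$, $(a_{ij})$ the Cartan matrix of type $A_{n-1}$, $[k]=(q^k-q^{-k})/(q-q^{-1})$, $[x,y]=xy-yx$. $U_q(\mathfrak{sl}_n^{\langle\mathbf{Q}\rangle}[x])$ is the $\mathbb{C}$-algebra with generators $X^{\pm}_{i,t},J_{i,t},K_i^{\pm}$ ($i\in I,t\ge0$) and relations: all $K_i^+$, $J_{j,t}$ pairwise commute; $K_i^+K_i^-=1=K_i^-K_i^+$; $(K_i^-)^2=1-(q-q^{-1})J_{i,0}$; $X^{\pm}_{i,t+1}X^{\pm}_{j,s}-q^{\pm a_{ij}}X^{\pm}_{j,s}X^{\pm}_{i,t+1}=q^{\pm a_{ij}}X^{\pm}_{i,t}X^{\pm}_{j,s+1}-X^{\pm}_{j,s+1}X^{\pm}_{i,t}$; $K_i^+X^{\pm}_{j,t}K_i^-=q^{\pm a_{ij}}X^{\pm}_{j,t}$; $q^{\pm a_{ij}}J_{i,0}X^{\pm}_{j,t}-q^{\mp a_{ij}}X^{\pm}_{j,t}J_{i,0}=[\pm a_{ij}]X^{\pm}_{j,t}$;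 $[J_{i,s+1},X^{\pm}_{j,t}]=q^{\pm a_{ij}}J_{i,s}X^{\pm}_{j,t+1}-q^{\mp a_{ij}}X^{\pm}_{j,t+1}J_{i,s}$; $[X^+_{i,t},X^-_{j,s}]=\delta_{ij}K_i^+(J_{i,s+t}-Q_iJ_{i,s+t+1})$; $[X^\pm_{i,t},X^\pm_{j,s}]=0$ if $j\ne i,i\pm1$; $X^{\pm}_{i\pm1,u}(X^{\pm}_{i,s}X^{\pm}_{i,t}+X^{\pm}_{i,t}X^{\pm}_{i,s})+(X^{\pm}_{i,s}X^{\pm}_{i,t}+X^{\pm}_{i,t}X^{\pm}_{i,s})X^{\pm}_{i\pm1,u}=(q+q^{-1})(X^{\pm}_{i,s}X^{\pm}_{i\pm1,u}X^{\pm}_{i,t}+X^{\pm}_{i,t}X^{\pm}_{i\pm1,u}X^{\pm}_{i,s})$. $\mathbb{B}^{\langle\mathbf{Q}\rangle}=\prod_{i\in I}\mathbb{B}^{\langle Q_i\rangle}$ with $\mathbb{B}^{\langle Q\rangle}=\{\pm1\}$ if $Q=0$ and $\mathbb{C}^\times$ if $Q\ne0$. For $\boldsymbol\beta=(\beta_i)\in\mathbb{B}^{\langle\mathbf{Q}\rangle}$, $\mathcal{D}^{\langle\mathbf{Q}\rangle}_{\boldsymbol\beta}=\mathbb{C}v$ is the one-dimensional module with $X^\pm_{i,t}v=0$, $K_i^\pm v=\beta_i^{\pm1}v$, and $J_{i,t}v=0$ if $Q_i=0$, $J_{i,t}v=\frac{1-\beta_i^{-2}}{q-q^{-1}}Q_i^{-t}v$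 if $Q_i\ne0$ ($i\in I$, $t\ge0$); this is a well-defined module. *)

theory Defs
  imports Complex_Main
begin

definition cartan :: "nat \<Rightarrow> nat \<Rightarrow> int" where
  "cartan i j = (if i = j then 2 else if j = i + 1 \<or> i = j + 1 then -1 else 0)"

definition qint :: "complex \<Rightarrow> int \<Rightarrow> complex" where
  "qint q k = (q powi k - q powi (-k)) / (q - inverse q)"

text \<open>X e i t is the action of X^+_{i,t} for e = 1 and of X^-_{i,t} for e = -1;
  J i t, Kp i, Km i are the actions of J_{i,t}, K_i^+, K_i^-.\<close>
definition is_Uq_module ::
  "complex \<Rightarrow> nat \<Rightarrow> (nat \<Rightarrow> complex) \<Rightarrow> (complex \<Rightarrow> 'v::ab_group_add \<Rightarrow> 'v)
   \<Rightarrow> (int \<Rightarrow> nat \<Rightarrow> nat \<Rightarrow> 'v \<Rightarrow> 'v) \<Rightarrow> (nat \<Rightarrow> nat \<Rightarrow> 'v \<Rightarrow> 'v)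
   \<Rightarrow> (nat \<Rightarrow> 'v \<Rightarrow> 'v) \<Rightarrow> (nat \<Rightarrow> 'v \<Rightarrow> 'v) \<Rightarrow> bool" where
  "is_Uq_module q n Q s X J Kp Km \<longleftrightarrow>
   (let I = {1..n-1}; S = {1, -1::int} in
    (\<forall>e\<in>S. \<forall>i\<in>I. \<forall>t. Vector_Spaces.linear s s (X e i t)) \<and>
    (\<forall>i\<in>I. \<forall>t. Vector_Spaces.linear s s (J i t)) \<and>
    (\<forall>i\<in>I. Vector_Spaces.linear s s (Kp i) \<and> Vector_Spaces.linear s s (Km i)) \<and>
    (\<forall>i\<in>I. \<forall>j\<in>I. \<forall>v. Kp i (Kp j v) = Kp j (Kp i v)) \<and>
    (\<forall>i\<in>I. \<forall>j\<in>I. \<forall>t v. Kp i (J j t v) = J j t (Kp i v)) \<and>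
    (\<forall>i\<in>I. \<forall>j\<in>I. \<forall>s' t v. J i s' (J j t v) = J j t (J i s' v)) \<and>
    (\<forall>i\<in>I. \<forall>v. Kp i (Km i v) = v \<and> Km i (Kp i v) = v) \<and>
    (\<forall>i\<in>I. \<forall>v. Km i (Km i v) = v - s (q - inverse q) (J i 0 v)) \<and>
    (\<forall>e\<in>S. \<forall>i\<in>I. \<forall>j\<in>I. \<forall>t u v.
        X e i (t+1) (X e j u v) - s (q powi (e * cartan i j)) (X e j u (X e i (t+1) v))
      = s (q powi (e * cartan i j)) (X e i t (X e j (u+1) v)) - X e j (u+1) (X e i t v)) \<and>
    (\<forall>e\<in>S. \<forall>i\<in>I. \<forall>j\<in>I. \<forall>t v.
        Kp i (X e j t (Km i v)) = s (q powi (e * cartan i j)) (X e j t v)) \<and>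
    (\<forall>e\<in>S. \<forall>i\<in>I. \<forall>j\<in>I. \<forall>t v.
        s (q powi (e * cartan i j)) (J i 0 (X e j t v)) - s (q powi (- e * cartan i j)) (X e j t (J i 0 v))
      = s (qint q (e * cartan i j)) (X e j t v)) \<and>
    (\<forall>e\<in>S. \<forall>i\<in>I. \<forall>j\<in>I. \<forall>u t v.
        J i (u+1) (X e j t v) - X e j t (J i (u+1) v)
      = s (q powi (e * cartan i j)) (J i u (X e j (t+1) v))
        - s (q powi (- e * cartan i j)) (X e j (t+1) (J i u v))) \<and>
    (\<forall>i\<in>I. \<forall>j\<in>I. \<forall>t u v.
        X 1 i t (X (-1) j u v) - X (-1) j u (X 1 i t v)
      = (if i = j then Kp i (J i (u+t) v - s (Q i) (J i (u+t+1) v)) else 0)) \<and>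
    (\<forall>e\<in>S. \<forall>i\<in>I. \<forall>j\<in>I. \<forall>t u v. j \<noteq> i \<and> j \<noteq> i + 1 \<and> j + 1 \<noteq> i \<longrightarrow>
        X e i t (X e j u v) = X e j u (X e i t v)) \<and>
    (\<forall>e\<in>S. \<forall>i\<in>I. \<forall>j\<in>I. \<forall>u t w v. (j = i + 1 \<or> j + 1 = i) \<longrightarrow>
        (let P = (\<lambda>x. X e i u (X e i t x) + X e i t (X e i u x)) in
         X e j w (P v) + P (X e j w v)
       = s (q + inverse q) (X e i u (X e j w (X e i t v)) + X e i t (X e j w (X e i u v))))))"

definition in_BQ :: "nat \<Rightarrow> (nat \<Rightarrow> complex) \<Rightarrow> (nat \<Rightarrow> complex) \<Rightarrow> bool" where
  "in_BQ n Q \<beta> \<longleftrightarrow> (\<forall>i\<in>{1..n-1}. if Q i = 0 then \<beta> i \<in> {1, -1} else \<beta> i \<noteq> 0)"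

text \<open>The scalar by which J_{i,t} acts on D_beta.\<close>
definition D_J :: "complex \<Rightarrow> (nat \<Rightarrow> complex) \<Rightarrow> (nat \<Rightarrow> complex) \<Rightarrow> nat \<Rightarrow> nat \<Rightarrow> complex" where
  "D_J q Q \<beta> i t = (if Q i = 0 then 0
      else (1 - inverse (\<beta> i ^ 2)) / (q - inverse q) * inverse (Q i ^ t))"

text \<open>('v, s) with the given action is isomorphic to D_beta = C (with scalar action):
  a bijective C-linear intertwiner to C.\<close>
definition iso_to_D ::
  "complex \<Rightarrow> nat \<Rightarrow> (nat \<Rightarrow> complex) \<Rightarrow> (complex \<Rightarrow> 'v::ab_group_add \<Rightarrow> 'v)
   \<Rightarrow> (int \<Rightarrow> nat \<Rightarrow> nat \<Rightarrow> 'v \<Rightarrow> 'v) \<Rightarrow> (nat \<Rightarrow> nat \<Rightarrow> 'v \<Rightarrow> 'v)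
   \<Rightarrow> (nat \<Rightarrow> 'v \<Rightarrow> 'v) \<Rightarrow> (nat \<Rightarrow> 'v \<Rightarrow> 'v) \<Rightarrow> (nat \<Rightarrow> complex) \<Rightarrow> bool" where
  "iso_to_D q n Q s X J Kp Km \<beta> \<longleftrightarrow>
   (\<exists>\<phi> :: 'v \<Rightarrow> complex. Vector_Spaces.linear s (*) \<phi> \<and> bij \<phi> \<and>
     (\<forall>i\<in>{1..n-1}. \<forall>v.
        (\<forall>e\<in>{1,-1::int}. \<forall>t. \<phi> (X e i t v) = 0) \<and>
        \<phi> (Kp i v) = \<beta> i * \<phi> v \<and>
        \<phi> (Km i v) = inverse (\<beta> i) * \<phi> v \<and>
        (\<forall>t. \<phi> (J i t v) = D_J q Q \<beta> i t * \<phi> v)))"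

end

theory Submission
  imports Defs
begin


lemma vs_complex: "vector_space ((*) :: complex \<Rightarrow> complex \<Rightarrow> complex)"
  by unfold_locales (auto simp: algebra_simps)

lemma onedim:
  fixes s :: "complex \<Rightarrow> 'v::ab_group_add \<Rightarrow> 'v"
  assumes vs: "vector_space s" and d: "vector_space.dim s (UNIV :: 'v set) = 1"
  shows "\<exists>\<phi> b. Vector_Spaces.linear s (*) \<phi> \<and> bij \<phi> \<and> \<phi> b = 1 \<and> (\<forall>v. v = s (\<phi> v) b)
     \<and> (\<forall>c. \<phi> (s c b) = c)"
proof -
  interpret vector_space s by fact
  obtain B where B: "independent B" "UNIV \<subseteq> span B" "card B = dim (UNIV :: 'v set)"
    using basis_exists[of UNIV] by blast
  then obtain b where Bb: "B = {b}" using d card_1_singletonE by metis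
  have b0: "b \<noteq> 0" using B(1) Bb by simp
  have sp: "\<forall>v. \<exists>c. v = s c b" using B(2) Bb span_singleton by auto
  define \<phi> where "\<phi> v = (THE c. v = s c b)" for v
  have phic: "\<phi> (s c b) = c" for c
    unfolding \<phi>_def using b0 by (rule_tac the_equality) auto
  have vrep: "v = s (\<phi> v) b" for v
    using sp phic by metis
  have lin: "Vector_Spaces.linear s (*) \<phi>"
    unfolding Vector_Spaces.linear_iff
  proof (intro conjI allI)
    show "vector_space s" by fact
    show "vector_space ((*) :: complex \<Rightarrow> complex \<Rightarrow> complex)" by (rule vs_complex)
    fix x y
    have "x + y = s (\<phi> x + \<phi> y) b" using vrep[of x] vrep[of y]
      by (metis scale_left_distrib)
    then show "\<phi> (x + y) = \<phi> x + \<phi> y" using phic by metis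
  next
    fix c x
    have "s c x = s (c * \<phi> x) b" using vrep[of x] by (metis scale_scale)
    then show "\<phi> (s c x) = c * \<phi> x" using phic by metis
  qed
  have "bij \<phi>"
    unfolding bij_def inj_def surj_def using vrep phic by metis
  moreover have "\<phi> b = 1" using phic[of 1] by simp
  ultimately show ?thesis using lin vrep phic by blast
qed


lemma phi_diff:
  assumes "Vector_Spaces.linear s (*) \<phi>"
  shows "\<phi> (x - y) = \<phi> x - \<phi> (y::'v::ab_group_add)"
proof -
  have "\<phi> (x - y) + \<phi> y = \<phi> x"
    using assms unfolding Vector_Spaces.linear_iff by (metis diff_add_cancel)
  then show ?thesis by (simp add: eq_diff_eq)
qed

lemma phi_scale:
  assumes "Vector_Spaces.linear s (*) \<phi>"
  shows "\<phi> (s c x) = c * \<phi> x"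
  using assms unfolding Vector_Spaces.linear_iff by blast

lemma phi_add:
  assumes "Vector_Spaces.linear s (*) \<phi>"
  shows "\<phi> (x + y) = \<phi> x + \<phi> y"
  using assms unfolding Vector_Spaces.linear_iff by blast

lemma phi_sc:
  assumes "Vector_Spaces.linear s (*) \<phi>" and "Vector_Spaces.linear s s f"
    and "\<forall>v. v = s (\<phi> v) b"
  shows "\<phi> (f v) = \<phi> (f b) * \<phi> v"
proof -
  have "f v = f (s (\<phi> v) b)" using assms(3) by metis
  also have "\<dots> = s (\<phi> v) (f b)" using assms(2) unfolding Vector_Spaces.linear_iff by blast
  finally show ?thesis using phi_scale[OF assms(1)] by simp
qed

lemma negeq: "(- a) * x = (- a) / d \<Longrightarrow> a * x = (a::complex) / d"
  by (simp add: minus_divide_left[symmetric])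

lemma canc: "a * x = a / d \<Longrightarrow> a \<noteq> 0 \<Longrightarrow> x = 1 / (d::complex)"
proof -
  assume h: "a * x = a / d" and a: "a \<noteq> 0"
  then have "a * x = a * (1 / d)" by (metis times_divide_eq_right mult.right_neutral)
  then show ?thesis using a by (metis mult_left_cancel)
qed

theorem mainTheorem12:
  fixes q :: complex and n :: nat and Q :: "nat \<Rightarrow> complex"
    and s :: "complex \<Rightarrow> 'v::ab_group_add \<Rightarrow> 'v"
    and X :: "int \<Rightarrow> nat \<Rightarrow> nat \<Rightarrow> 'v \<Rightarrow> 'v" and J :: "nat \<Rightarrow> nat \<Rightarrow> 'v \<Rightarrow> 'v"
    and Kp Km :: "nat \<Rightarrow> 'v \<Rightarrow> 'v"
  assumes "q \<noteq> 0" and "\<forall>m::nat. m > 0 \<longrightarrow> q ^ m \<noteq> 1" and "n \<ge> 2"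
    and "vector_space s" and "vector_space.dim s (UNIV :: 'v set) = 1"
    and "is_Uq_module q n Q s X J Kp Km"
  shows "\<exists>\<beta>. in_BQ n Q \<beta> \<and> iso_to_D q n Q s X J Kp Km \<beta>"
proof -
  obtain \<phi> b where lin: "Vector_Spaces.linear s (*) \<phi>" and bj: "bij \<phi>" and b1: "\<phi> b = 1"
    and rep: "\<forall>v. v = s (\<phi> v) b"
    using onedim[OF assms(4,5)] by blast
  note sc = phi_sc[OF lin _ rep]
  note df = phi_diff[OF lin]
  note scl = phi_scale[OF lin]
  note ad = phi_add[OF lin]
  have q0: "q \<noteq> 0" by fact
  have q2: "q ^ 2 \<noteq> 1" and q4: "q ^ 4 \<noteq> 1" using assms(2) by auto
  have qq: "q - inverse q \<noteq> 0"
  proof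
    assume "q - inverse q = 0"
    then have "q * q = 1" using q0 by (simp add: field_simps)
    then show False using q2 by (simp add: power2_eq_square)
  qed
  have qq2: "q ^ 2 - inverse (q ^ 2) \<noteq> 0"
  proof
    assume "q ^ 2 - inverse (q ^ 2) = 0"
    then have "q ^ 2 * q ^ 2 = 1" using q0 by (simp add: field_simps)
    then show False using q4 by (simp add: power_add[symmetric])
  qed
  note M = assms(6)[unfolded is_Uq_module_def Let_def]
  note M1 = M[THEN conjunct1]
  note M2 = M[THEN conjunct2, THEN conjunct1]
  note M3 = M[THEN conjunct2, THEN conjunct2, THEN conjunct1]
  note M7 = M[THEN conjunct2, THEN conjunct2, THEN conjunct2, THEN conjunct2, THEN conjunct2, THEN conjunct2, THEN conjunct1]
  note M8 = M[THEN conjunct2, THEN conjunct2, THEN conjunct2, THEN conjunct2, THEN conjunct2, THEN conjunct2, THEN conjunct2, THEN conjunct1]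
  note M11 = M[THEN conjunct2, THEN conjunct2, THEN conjunct2, THEN conjunct2, THEN conjunct2, THEN conjunct2, THEN conjunct2, THEN conjunct2, THEN conjunct2, THEN conjunct2, THEN conjunct1]
  note M13 = M[THEN conjunct2, THEN conjunct2, THEN conjunct2, THEN conjunct2, THEN conjunct2, THEN conjunct2, THEN conjunct2, THEN conjunct2, THEN conjunct2, THEN conjunct2, THEN conjunct2, THEN conjunct2, THEN conjunct1]
  have key: "\<phi> (Kp i b) \<noteq> 0 \<and> (if Q i = 0 then \<phi> (Kp i b) \<in> {1, -1} else True) \<and>
     (\<forall>v. (\<forall>e\<in>{1,-1::int}. \<forall>t. \<phi> (X e i t v) = 0) \<and>
        \<phi> (Kp i v) = \<phi> (Kp i b) * \<phi> v \<and>
        \<phi> (Km i v) = inverse (\<phi> (Kp i b)) * \<phi> v \<and>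
        (\<forall>t. \<phi> (J i t v) = D_J q Q (\<lambda>i. \<phi> (Kp i b)) i t * \<phi> v))"
    if iI: "i \<in> {1..n-1}" for i
  proof -
    define kp where "kp = \<phi> (Kp i b)"
    define km where "km = \<phi> (Km i b)"
    define jj where "jj t = \<phi> (J i t b)" for t
    have lKp: "Vector_Spaces.linear s s (Kp i)" and lKm: "Vector_Spaces.linear s s (Km i)"
      using M3 iI by auto
    have lJ: "Vector_Spaces.linear s s (J i t)" for t using M2 iI by auto
    have lX: "Vector_Spaces.linear s s (X e i t)" if "e \<in> {1,-1}" for e t using M1 iI that by auto
    have kk: "kp * km = 1"
    proof -
      have "Kp i (Km i b) = b" using M7 iI by auto
      then have "\<phi> (Kp i (Km i b)) = 1" using b1 by simp
      then show ?thesis using sc[OF lKp, of "Km i b"] unfolding kp_def km_def by simp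
    qed
    have kp0: "kp \<noteq> 0" using kk by auto
    have kmi: "km = inverse kp" using kk by (metis inverse_unique mult.commute)
    have km2: "km * km = 1 - (q - inverse q) * jj 0"
    proof -
      have "Km i (Km i b) = b - s (q - inverse q) (J i 0 b)" using M8 iI by auto
      then have "\<phi> (Km i (Km i b)) = 1 - (q - inverse q) * jj 0"
        using b1 df scl unfolding jj_def by simp
      then show ?thesis using sc[OF lKm, of "Km i b"] unfolding km_def by simp
    qed
    have xz: "\<phi> (X e i t b) = 0" if e: "e \<in> {1,-1}" for e t
    proof (rule ccontr)
      assume nz: "\<phi> (X e i t b) \<noteq> 0"
      define x where "x = \<phi> (X e i t b)"
      have "s (q powi (e * cartan i i)) (J i 0 (X e i t b)) - s (q powi (- e * cartan i i)) (X e i t (J i 0 b))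
        = s (qint q (e * cartan i i)) (X e i t b)" using bspec[OF bspec[OF bspec[OF M11 e] iI] iI, rule_format, of t b] by simp
      then have E0: "\<phi> (s (q powi (e * cartan i i)) (J i 0 (X e i t b)) - s (q powi (- e * cartan i i)) (X e i t (J i 0 b)))
        = \<phi> (s (qint q (e * cartan i i)) (X e i t b))" by simp
      then have "q powi (e * 2) * (jj 0 * x) - q powi (- e * 2) * (x * jj 0) = qint q (e * 2) * x"
        using df scl sc[OF lJ[of 0], of "X e i t b"] sc[OF lX[OF e, of t], of "J i 0 b"]
        unfolding jj_def x_def by (simp add: cartan_def)
      then have "(q powi (e * 2) - q powi (- e * 2)) * jj 0 * x = qint q (e * 2) * x"
        by (simp add: algebra_simps)
      then have E: "(q powi (e * 2) - q powi (- e * 2)) * jj 0 = qint q (e * 2)"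
        using nz unfolding x_def by simp
      have "(q ^ 2 - inverse (q ^ 2)) * jj 0 = (q ^ 2 - inverse (q ^ 2)) / (q - inverse q)"
      proof (cases "e = 1")
        case True
        then show ?thesis using E by (simp add: qint_def power_int_minus)
      next
        case False
        then have "e = -1" using e by auto
        then have "(inverse (q ^ 2) - q ^ 2) * jj 0 = (inverse (q ^ 2) - q ^ 2) / (q - inverse q)"
          using E by (simp add: qint_def power_int_minus)
        then have "(- (q ^ 2 - inverse (q ^ 2))) * jj 0 = (- (q ^ 2 - inverse (q ^ 2))) / (q - inverse q)"
          by (simp only: minus_diff_eq)
        then show ?thesis by (rule negeq)
      qed
      then have "jj 0 = 1 / (q - inverse q)" using qq2 by (rule canc)
      then have "km * km = 0" using km2 qq by simp
      then show False using kk by simp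
    qed
    have Xz: "\<phi> (X e i t v) = 0" if e: "e \<in> {1,-1}" for e t v
      using sc[OF lX[OF e, of t], of v] xz[OF e, of t] by simp
    have jrec: "jj u = Q i * jj (u + 1)" for u
    proof -
      have "X 1 i 0 (X (-1) i u b) - X (-1) i u (X 1 i 0 b) = Kp i (J i u b - s (Q i) (J i (u+1) b))"
        using bspec[OF bspec[OF M13 iI] iI, rule_format, of 0 u b] by simp
      then have E: "\<phi> (X 1 i 0 (X (-1) i u b) - X (-1) i u (X 1 i 0 b)) = \<phi> (Kp i (J i u b - s (Q i) (J i (u+1) b)))"
        by simp
      have "0 = \<phi> (X 1 i 0 (X (-1) i u b) - X (-1) i u (X 1 i 0 b))"
        using df Xz by simp
      also have "\<dots> = kp * \<phi> (J i u b - s (Q i) (J i (u+1) b))"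
        using E sc[OF lKp, of "J i u b - s (Q i) (J i (u+1) b)"] unfolding kp_def by simp
      also have "\<dots> = kp * (jj u - Q i * jj (u + 1))"
        using df scl unfolding jj_def by simp
      finally have "0 = kp * (jj u - Q i * jj (u + 1))" .
      then show ?thesis using kp0 by simp
    qed
    have j0: "jj 0 = (1 - inverse (kp ^ 2)) / (q - inverse q)"
      using km2 kmi qq by (simp add: field_simps power2_eq_square)
    have jt: "jj t = D_J q Q (\<lambda>i. \<phi> (Kp i b)) i t" for t
    proof (cases "Q i = 0")
      case True
      then show ?thesis using jrec[of t] unfolding D_J_def by simp
    next
      case False
      show ?thesis
      proof (induction t)
        case 0
        then show ?case using False j0 unfolding D_J_def kp_def by simp
      next
        case (Suc t)
        have "jj (Suc t) = jj t / Q i" using jrec[of t] False by (simp add: field_simps)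
        then show ?case using Suc False unfolding D_J_def by (simp add: field_simps)
      qed
    qed
    have bq: "(if Q i = 0 then kp \<in> {1, -1} else True)"
    proof (cases "Q i = 0")
      case True
      then have "jj 0 = 0" using jrec[of 0] by simp
      then have "inverse (kp ^ 2) = 1" using j0 qq by simp
      then have "kp ^ 2 = 1" by (metis inverse_1 inverse_inverse_eq)
      then have "kp = 1 \<or> kp = -1" by (simp add: power2_eq_1_iff)
      then show ?thesis by auto
    qed simp
    have A1: "\<phi> (Kp i v) = kp * \<phi> v" for v using sc[OF lKp, of v] unfolding kp_def by simp
    have A2: "\<phi> (Km i v) = inverse kp * \<phi> v" for v using sc[OF lKm, of v] kmi unfolding km_def by simp
    have A3: "\<phi> (J i t v) = D_J q Q (\<lambda>i. \<phi> (Kp i b)) i t * \<phi> v" for t v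
      using sc[OF lJ[of t], of v] jt[of t] unfolding jj_def by simp
    show ?thesis
      using kp0 bq Xz A1 A2 A3 unfolding kp_def by blast
  qed
  have bq: "in_BQ n Q (\<lambda>i. \<phi> (Kp i b))" unfolding in_BQ_def
  proof
    fix i assume iI: "i \<in> {1..n-1}"
    have a: "\<phi> (Kp i b) \<noteq> 0" using key[OF iI] by blast
    have c: "if Q i = 0 then \<phi> (Kp i b) \<in> {1, -1} else True" using key[OF iI] by blast
    show "if Q i = 0 then \<phi> (Kp i b) \<in> {1, -1} else \<phi> (Kp i b) \<noteq> 0"
      using a c by (cases "Q i = 0") simp_all
  qed
  have iso: "iso_to_D q n Q s X J Kp Km (\<lambda>i. \<phi> (Kp i b))" unfolding iso_to_D_def
    apply (rule exI[of _ \<phi>])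
    apply (intro conjI lin bj)
    apply (intro ballI allI)
    subgoal for i v
      using key[THEN conjunct2, THEN conjunct2, THEN spec[of _ v]] by blast
    done
  show ?thesis using bq iso by blast
qed

end
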